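(* Consider the network and loss from the context. Let $\overline{\mathbf{P}}$ be a stationary point, let $i_0\in I$, and let $\overline{\mathbf{P}}'$ be obtained from $\overline{\mathbf{P}}$ by unit replication of neuron $i_0$ with coefficients $(\beta_l,\gamma_l)_{l\in L}$ (so $\beta_l>0$ and $\sum_{l\in L}\beta_l\gamma_l=1$). Then $\overline{\mathbf{P}}'$ is a stationary point of the loss of the widened network if and only if at least one of the following holds: (1) every tangential derivative of $\mathcal{L}$ with respect to $\mathbf{w}_{i_0}$ at $\overline{\mathbf{P}}$ equals $0$, i.e. $\sum_{j\in J}\overline{h}_{ji_0}\mathbf{d}_{ji_0}^{\mathbf{v}}\cdot\mathbf{v}=0$ for every tangential direction $\mathbf{v}$ of $\overline{\mathbf{w}}_{i_0}$; (2) $\gamma_l\ge0$ for all $l\in L$. Moreover, if $\overline{\mathbf{P}}$ is a type-1 local minimum, then $\overline{\mathbf{P}}'$ is a type-1 local minimum of the loss of the widened network if and only if at least one of the following holds: (1) every tangential derivative of $\mathcal{L}$ with respect to $\mathbf{w}_{i_0}$ at $\overline{\mathbf{P}}$ equals $0$; (2) $\gamma_l>0$ for all $l\in L$.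
   Context: Fix an integer $d>1$, finite index sets $I$ (hidden), $J$ (output), $K$ (samples), reals $\alpha^+\neq\alpha^-$, $\rho(z)=\alpha^+z$ for $z\ge0$, $\rho(z)=\alpha^-z$ for $z<0$ (componentwise). Parameters $\mathbf{P}$ consist of input weights $\mathbf{w}_i\in\mathbb{R}^d$ and output weights $h_{ji}$ ($i\in I$, $j\in J$); output $\hat{\mathbf{y}}(\mathbf{P};\mathbf{x})_j=\sum_{i\in I}h_{ji}\rho(\mathbf{w}_i\cdot\mathbf{x})$; training data $(\mathbf{x}_k,\mathbf{y}_k)_{k\in K}$; loss $\mathcal{L}(\mathbf{P})=\frac12\sum_k\|\hat{\mathbf{y}}(\mathbf{P};\mathbf{x}_k)-\mathbf{y}_k\|^2$; $e_{kj}=\hat y_{kj}-y_{kj}$. The same definitions apply to a network with any finite hidden index set. Stationary point: $\overline{\mathbf{P}}$ with $\lim_{\alpha\to0^+}\frac{\mathcal{L}(\overline{\mathbf{P}}+\alpha\mathbf{d})-\mathcal{L}(\overline{\mathbf{P}})}{\alpha}\ge0$ for all directions $\mathbf{d}$. Tangential directions of $\mathbf{w}_i$: unit vectors orthogonal to $\mathbf{w}_i$ if $\mathbf{w}_i\ne\mathbf{0}$; any unit vector if $\mathbf{w}_i=\mathbf{0}$. For a tangential direction $\mathbf{v}$, $\mathbf{d}_{ji}^{\mathbf{v}}=\lim_{\Delta\to0^+}\big(\sum_{k:(\mathbf{w}_i+\Delta\mathbf{v})\cdot\mathbf{x}_k>0}\alpha^+e_{kj}\mathbf{x}_k+\sum_{k:(\mathbf{w}_i+\Delta\mathbf{v})\cdot\mathbf{x}_k<0}\alpha^-e_{kj}\mathbf{x}_k\big)$,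 and the tangential derivative $\lim_{\Delta\to0^+}\frac{\mathcal{L}(\ldots,\mathbf{w}_i+\Delta\mathbf{v},\ldots)-\mathcal{L}(\ldots,\mathbf{w}_i,\ldots)}{\Delta}$ equals $\sum_{j}h_{ji}\mathbf{d}_{ji}^{\mathbf{v}}\cdot\mathbf{v}$. Escape neuron: at a stationary point, hidden neuron $i$ is an escape neuron iff there exist $j'\in J$ and a tangential direction $\mathbf{v}$ of $\mathbf{w}_i$ with $\sum_{j}h_{ji}\mathbf{d}_{ji}^{\mathbf{v}}\cdot\mathbf{v}=0$ and $\mathbf{d}_{j'i}^{\mathbf{v}}\cdot\mathbf{v}\ne0$. A type-1 local minimum is a local minimum of the loss (a stationary point) at which no hidden neuron is an escape neuron. Unit replication: given $\mathbf{P}$ and $i_0\in I$, replace neuron $i_0$ by a finite set of new hidden neurons $\{i_0^l: l\in L\}$ with $\mathbf{w}_{i_0^l}=\beta_l\mathbf{w}_{i_0}$ and $h_{ji_0^l}=\gamma_lh_{ji_0}$ for all $j\in J$, where $\beta_l>0$ for all $l$ and $\sum_{l\in L}\beta_l\gamma_l=1$; all other neurons are unchanged. This preserves the network function. *)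

theory Defs
  imports "HOL-Analysis.Analysis"
begin

definition rho :: "real \<Rightarrow> real \<Rightarrow> real \<Rightarrow> real" where
  "rho ap am z = (if z \<ge> 0 then ap * z else am * z)"

definition out :: "real \<Rightarrow> real \<Rightarrow> 'h set \<Rightarrow> ('h \<Rightarrow> real^'d) \<Rightarrow> ('j \<Rightarrow> 'h \<Rightarrow> real)
                   \<Rightarrow> real^'d \<Rightarrow> 'j \<Rightarrow> real" where
  "out ap am H w h xx j = (\<Sum>i\<in>H. h j i * rho ap am (w i \<bullet> xx))"

definition err :: "real \<Rightarrow> real \<Rightarrow> ('k \<Rightarrow> real^'d) \<Rightarrow> ('k \<Rightarrow> 'j \<Rightarrow> real) \<Rightarrow> 'h set
                   \<Rightarrow> ('h \<Rightarrow> real^'d) \<Rightarrow> ('j \<Rightarrow> 'h \<Rightarrow> real) \<Rightarrow> 'k \<Rightarrow> 'j \<Rightarrow> real" where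
  "err ap am x y H w h k j = out ap am H w h (x k) j - y k j"

definition loss :: "real \<Rightarrow> real \<Rightarrow> ('k \<Rightarrow> real^'d) \<Rightarrow> ('k \<Rightarrow> 'j \<Rightarrow> real) \<Rightarrow> 'k set \<Rightarrow> 'j set
                    \<Rightarrow> 'h set \<Rightarrow> ('h \<Rightarrow> real^'d) \<Rightarrow> ('j \<Rightarrow> 'h \<Rightarrow> real) \<Rightarrow> real" where
  "loss ap am x y K J H w h = (1/2) * (\<Sum>k\<in>K. \<Sum>j\<in>J. (err ap am x y H w h k j)\<^sup>2)"

definition stationary where
  "stationary ap am x y K J H w h \<longleftrightarrow>
     (\<forall>(dw :: 'h \<Rightarrow> real^'d) (dh :: 'j \<Rightarrow> 'h \<Rightarrow> real). \<exists>D\<ge>0.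
        ((\<lambda>\<alpha>. (loss ap am x y K J H (\<lambda>i. w i + \<alpha> *\<^sub>R dw i) (\<lambda>j i. h j i + \<alpha> * dh j i)
                 - loss ap am x y K J H w h) / \<alpha>) \<longlongrightarrow> D) (at_right 0))"

definition local_min where
  "local_min ap am x y K J H w h \<longleftrightarrow>
     (\<exists>\<epsilon>>0. \<forall>(w' :: 'h \<Rightarrow> real^'d) (h' :: 'j \<Rightarrow> 'h \<Rightarrow> real).
        (\<forall>i\<in>H. norm (w' i - w i) < \<epsilon>) \<and> (\<forall>j\<in>J. \<forall>i\<in>H. \<bar>h' j i - h j i\<bar> < \<epsilon>)
        \<longrightarrow> loss ap am x y K J H w h \<le> loss ap am x y K J H w' h')"

definition tangential :: "real^'d \<Rightarrow> real^'d \<Rightarrow> bool" where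
  "tangential wi v \<longleftrightarrow> norm v = 1 \<and> (wi \<noteq> 0 \<longrightarrow> wi \<bullet> v = 0)"

definition dvec where
  "dvec ap am x y K J H w h i j (v :: real^'d) = Lim (at_right (0::real))
     (\<lambda>\<Delta>. (\<Sum>k\<in>{k\<in>K. (w i + \<Delta> *\<^sub>R v) \<bullet> x k > 0}. (ap * err ap am x y H w h k j) *\<^sub>R x k)
         + (\<Sum>k\<in>{k\<in>K. (w i + \<Delta> *\<^sub>R v) \<bullet> x k < 0}. (am * err ap am x y H w h k j) *\<^sub>R x k))"

definition tderiv where
  "tderiv ap am x y K J H w h i v = (\<Sum>j\<in>J. h j i * (dvec ap am x y K J H w h i j v \<bullet> v))"

definition escape where
  "escape ap am x y K J H w h i \<longleftrightarrow>
     (\<exists>j'\<in>J. \<exists>v. tangential (w i) v \<and> tderiv ap am x y K J H w h i v = 0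
                 \<and> dvec ap am x y K J H w h i j' v \<bullet> v \<noteq> 0)"

definition type1_min where
  "type1_min ap am x y K J H w h \<longleftrightarrow>
     local_min ap am x y K J H w h \<and> stationary ap am x y K J H w h \<and>
     (\<forall>i\<in>H. \<not> escape ap am x y K J H w h i)"

definition repH :: "'i set \<Rightarrow> 'i \<Rightarrow> 'l set \<Rightarrow> ('i + 'l) set" where
  "repH I i0 L = Inl ` (I - {i0}) \<union> Inr ` L"

definition repw :: "('i \<Rightarrow> real^'d) \<Rightarrow> 'i \<Rightarrow> ('l \<Rightarrow> real) \<Rightarrow> ('i + 'l) \<Rightarrow> real^'d" where
  "repw w i0 \<beta> = case_sum w (\<lambda>l. \<beta> l *\<^sub>R w i0)"

definition reph :: "('j \<Rightarrow> 'i \<Rightarrow> real) \<Rightarrow> 'i \<Rightarrow> ('l \<Rightarrow> real) \<Rightarrow> 'j \<Rightarrow> ('i + 'l) \<Rightarrow> real" where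
  "reph h i0 \<gamma> j = case_sum (h j) (\<lambda>l. \<gamma> l * h j i0)"

end

theory Submission
  imports Defs
begin

lemma cone_bound:
  fixes a c :: "'a::euclidean_space" and b :: "'k \<Rightarrow> 'a"
  assumes "subspace V" "finite K"
    and "\<forall>u\<in>V. (\<forall>k\<in>K. 0 \<le> b k \<bullet> u) \<longrightarrow> 0 \<le> a \<bullet> u"
    and "\<forall>u\<in>V. (\<forall>k\<in>K. 0 \<le> b k \<bullet> u) \<longrightarrow> a \<bullet> u = 0 \<longrightarrow> c \<bullet> u = 0"
  shows "\<exists>M. \<forall>u\<in>V. (\<forall>k\<in>K. 0 \<le> b k \<bullet> u) \<longrightarrow> \<bar>c \<bullet> u\<bar> \<le> M * (a \<bullet> u)"
  using assms
proof (induct "dim V" arbitrary: V K rule: less_induct)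
  case less
  note sV = less.prems(1) and fK = less.prems(2) and nn = less.prems(3) and zz = less.prems(4)
  show ?case
  proof (cases "\<exists>us\<in>V. (\<forall>k\<in>K. 0 \<le> b k \<bullet> us) \<and> us \<noteq> 0 \<and> a \<bullet> us = 0")
    case True
    then obtain us where us: "us \<in> V" "\<forall>k\<in>K. 0 \<le> b k \<bullet> us" "us \<noteq> 0" "a \<bullet> us = 0" by blast
    have cus: "c \<bullet> us = 0" using zz us by blast
    define V' where "V' = V \<inter> {s. us \<bullet> s = 0}"
    define K' where "K' = {k\<in>K. b k \<bullet> us = 0}"
    have sV': "subspace V'" unfolding V'_def by (intro subspace_inter sV subspace_hyperplane)
    have "us \<notin> V'" using us unfolding V'_def by auto
    moreover have "V' \<subseteq> V" unfolding V'_def by auto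
    ultimately have "V' \<subset> V" using us(1) by blast
    hence "span V' \<subset> span V" using sV sV' by (metis span_eq_iff)
    hence dlt: "dim V' < dim V" by (rule dim_psubset)
    have fK': "finite K'" using fK unfolding K'_def by auto
    have key: "\<exists>t>0. (\<forall>k\<in>K. 0 \<le> b k \<bullet> (us + t *\<^sub>R s))" if s: "s \<in> V'" "\<forall>k\<in>K'. 0 \<le> b k \<bullet> s" for s
    proof -
      define t where "t = Min (insert 1 ((\<lambda>k. (b k \<bullet> us) / (\<bar>b k \<bullet> s\<bar> + 1)) ` (K - K')))"
      have pos: "\<forall>k\<in>K - K'. b k \<bullet> us > 0" using us(2) unfolding K'_def by force
      have fin: "finite (insert 1 ((\<lambda>k. (b k \<bullet> us) / (\<bar>b k \<bullet> s\<bar> + 1)) ` (K - K')))" using fK by simp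
      have tpos: "t > 0" unfolding t_def
      proof (subst Min_gr_iff[OF fin])
        show "insert 1 ((\<lambda>k. (b k \<bullet> us) / (\<bar>b k \<bullet> s\<bar> + 1)) ` (K - K')) \<noteq> {}" by simp
        show "\<forall>a\<in>insert 1 ((\<lambda>k. (b k \<bullet> us) / (\<bar>b k \<bullet> s\<bar> + 1)) ` (K - K')). 0 < a"
        proof
          fix a assume "a \<in> insert 1 ((\<lambda>k. (b k \<bullet> us) / (\<bar>b k \<bullet> s\<bar> + 1)) ` (K - K'))"
          then consider "a = 1" | k where "k \<in> K - K'" "a = (b k \<bullet> us) / (\<bar>b k \<bullet> s\<bar> + 1)" by blast
          then show "0 < a"
          proof cases
            case 2
            have "0 < b k \<bullet> us" using pos 2(1) by blast
            moreover have "0 < \<bar>b k \<bullet> s\<bar> + 1" by simp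
            ultimately show ?thesis using 2(2) by simp
          qed simp
        qed
      qed
      have tle: "t \<le> (b k \<bullet> us) / (\<bar>b k \<bullet> s\<bar> + 1)" if "k \<in> K - K'" for k
        unfolding t_def by (rule Min_le[OF fin]) (use that in blast)
      have "0 \<le> b k \<bullet> (us + t *\<^sub>R s)" if k: "k \<in> K" for k
      proof (cases "k \<in> K'")
        case True
        then show ?thesis using s(2) tpos unfolding K'_def by (auto simp: inner_add_right)
      next
        case False
        hence kk: "k \<in> K - K'" using k by auto
        have "t * (\<bar>b k \<bullet> s\<bar> + 1) \<le> b k \<bullet> us" using tle[OF kk]
          by (simp add: pos_le_divide_eq add_pos_nonneg)
        moreover have "- (t * (b k \<bullet> s)) \<le> t * (\<bar>b k \<bullet> s\<bar> + 1)"
        proof -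
          have "t * (- (b k \<bullet> s)) \<le> t * \<bar>b k \<bullet> s\<bar>" using tpos by (intro mult_left_mono) auto
          thus ?thesis using tpos by (simp add: algebra_simps)
        qed
        ultimately show ?thesis by (simp add: inner_add_right)
      qed
      thus ?thesis using tpos by blast
    qed
    have nn': "\<forall>s\<in>V'. (\<forall>k\<in>K'. 0 \<le> b k \<bullet> s) \<longrightarrow> 0 \<le> a \<bullet> s"
    proof (intro ballI impI)
      fix s assume s: "s \<in> V'" "\<forall>k\<in>K'. 0 \<le> b k \<bullet> s"
      then obtain t where t: "t > 0" "\<forall>k\<in>K. 0 \<le> b k \<bullet> (us + t *\<^sub>R s)" using key by blast
      have "us + t *\<^sub>R s \<in> V" using s us sV unfolding V'_def by (auto intro: subspace_add subspace_scale)
      hence "0 \<le> a \<bullet> (us + t *\<^sub>R s)" using nn t by blast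
      hence "0 \<le> t * (a \<bullet> s)" using us by (simp add: inner_add_right)
      thus "0 \<le> a \<bullet> s" using t by (simp add: zero_le_mult_iff)
    qed
    have zz': "\<forall>s\<in>V'. (\<forall>k\<in>K'. 0 \<le> b k \<bullet> s) \<longrightarrow> a \<bullet> s = 0 \<longrightarrow> c \<bullet> s = 0"
    proof (intro ballI impI)
      fix s assume s: "s \<in> V'" "\<forall>k\<in>K'. 0 \<le> b k \<bullet> s" "a \<bullet> s = 0"
      then obtain t where t: "t > 0" "\<forall>k\<in>K. 0 \<le> b k \<bullet> (us + t *\<^sub>R s)" using key by blast
      have "us + t *\<^sub>R s \<in> V" using s us sV unfolding V'_def by (auto intro: subspace_add subspace_scale)
      moreover have "a \<bullet> (us + t *\<^sub>R s) = 0" using us s by (simp add: inner_add_right)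
      ultimately have "c \<bullet> (us + t *\<^sub>R s) = 0" using zz t by blast
      hence "t * (c \<bullet> s) = 0" using cus by (simp add: inner_add_right)
      thus "c \<bullet> s = 0" using t by simp
    qed
    obtain M where M: "\<forall>s\<in>V'. (\<forall>k\<in>K'. 0 \<le> b k \<bullet> s) \<longrightarrow> \<bar>c \<bullet> s\<bar> \<le> M * (a \<bullet> s)"
      using less.hyps[OF dlt sV' fK' nn' zz'] by blast
    have "\<bar>c \<bullet> u\<bar> \<le> M * (a \<bullet> u)" if u: "u \<in> V" "\<forall>k\<in>K. 0 \<le> b k \<bullet> u" for u
    proof -
      define s where "s = u - ((us \<bullet> u) / (us \<bullet> us)) *\<^sub>R us"
      have nz: "us \<bullet> us \<noteq> 0" using us by simp
      have "s \<in> V" unfolding s_def using u us sV by (auto intro: subspace_diff subspace_scale)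
      moreover have "us \<bullet> s = 0" unfolding s_def using nz by (simp add: inner_diff_right)
      ultimately have sV': "s \<in> V'" unfolding V'_def by auto
      have "\<forall>k\<in>K'. b k \<bullet> s = b k \<bullet> u" unfolding s_def K'_def by (auto simp: inner_diff_right)
      hence "\<forall>k\<in>K'. 0 \<le> b k \<bullet> s" using u unfolding K'_def by auto
      hence "\<bar>c \<bullet> s\<bar> \<le> M * (a \<bullet> s)" using M sV' by blast
      moreover have "c \<bullet> s = c \<bullet> u" "a \<bullet> s = a \<bullet> u" unfolding s_def using us cus by (auto simp: inner_diff_right)
      ultimately show ?thesis by simp
    qed
    thus ?thesis by blast
  next
    case False
    hence pos: "\<forall>u\<in>V. (\<forall>k\<in>K. 0 \<le> b k \<bullet> u) \<longrightarrow> u \<noteq> 0 \<longrightarrow> 0 < a \<bullet> u"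
    proof (intro ballI impI)
      fix u assume u: "u \<in> V" "\<forall>k\<in>K. 0 \<le> b k \<bullet> u" "u \<noteq> 0"
      have "0 \<le> a \<bullet> u" using nn u by blast
      moreover have "a \<bullet> u \<noteq> 0" using False u by blast
      ultimately show "0 < a \<bullet> u" by simp
    qed
    define S where "S = {u\<in>V. (\<forall>k\<in>K. 0 \<le> b k \<bullet> u) \<and> norm u = 1}"
    have "closed S"
    proof -
      have "S = V \<inter> (\<Inter>k\<in>K. {u. b k \<bullet> u \<ge> 0}) \<inter> {u. norm u = 1}" unfolding S_def by auto
      moreover have "closed {u::'a. norm u = 1}" by (simp add: closed_Collect_eq continuous_on_norm_id continuous_on_const)
      moreover have "closed (\<Inter>k\<in>K. {u. b k \<bullet> u \<ge> 0})"
        by (intro closed_INT) (simp add: closed_halfspace_ge)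
      ultimately show ?thesis using closed_subspace[OF sV] by (metis closed_Int)
    qed
    moreover have "bounded S" unfolding bounded_iff S_def by (intro exI[of _ 1]) auto
    ultimately have cS: "compact S" by (simp add: compact_eq_bounded_closed)
    show ?thesis
    proof (cases "S = {}")
      case True
      have "\<bar>c \<bullet> u\<bar> \<le> 0 * (a \<bullet> u)" if u: "u \<in> V" "\<forall>k\<in>K. 0 \<le> b k \<bullet> u" for u
      proof (cases "u = 0")
        case False
        have "(1 / norm u) *\<^sub>R u \<in> S" unfolding S_def using u False sV
          by (auto intro: subspace_scale simp: inner_scaleR_right)
        thus ?thesis using True by auto
      qed simp
      thus ?thesis by blast
    next
      case False
      obtain um where um: "um \<in> S" "\<forall>v\<in>S. a \<bullet> um \<le> a \<bullet> v"
      proof -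
        have "continuous_on S (\<lambda>u. a \<bullet> u)" by (intro continuous_intros)
        from continuous_attains_inf[OF cS False this] show ?thesis using that by blast
      qed
      define m where "m = a \<bullet> um"
      have mpos: "m > 0" unfolding m_def using um(1) pos unfolding S_def by auto
      have "\<bar>c \<bullet> u\<bar> \<le> (norm c / m) * (a \<bullet> u)" if u: "u \<in> V" "\<forall>k\<in>K. 0 \<le> b k \<bullet> u" for u
      proof (cases "u = 0")
        case False
        have "(1 / norm u) *\<^sub>R u \<in> S" unfolding S_def using u False sV
          by (auto intro: subspace_scale simp: inner_scaleR_right)
        hence "m \<le> a \<bullet> ((1 / norm u) *\<^sub>R u)" using um unfolding m_def by blast
        hence "m * norm u \<le> a \<bullet> u" using False by (simp add: field_simps)
        hence "norm c * (m * norm u) \<le> norm c * (a \<bullet> u)" by (simp add: mult_left_mono)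
        hence "norm c * norm u \<le> (norm c / m) * (a \<bullet> u)" using mpos by (simp add: field_simps)
        thus ?thesis using Cauchy_Schwarz_ineq2[of c u] by linarith
      qed simp
      thus ?thesis by blast
    qed
  qed
qed

definition rd :: "real \<Rightarrow> real \<Rightarrow> real \<Rightarrow> real \<Rightarrow> real" where
  "rd ap am z t = (if z = 0 then rho ap am t else if z > 0 then ap * t else am * t)"

lemma rho_add: assumes "(z \<noteq> 0 \<longrightarrow> \<bar>t\<bar> \<le> \<bar>z\<bar>)" shows "rho ap am (z + t) = rho ap am z + rd ap am z t"
proof -
  consider "z = 0" | "z > 0" | "z < 0" "z + t = 0" | "z < 0" "z + t < 0" using assms by linarith
  thus ?thesis
  proof cases
    case 2 hence "z + t \<ge> 0" using assms by linarith
    thus ?thesis using 2 by (simp add: rho_def rd_def algebra_simps)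
  next
    case 3
    have "am * z + am * t = am * (z + t)" by (simp add: algebra_simps)
    thus ?thesis using 3 by (simp add: rho_def rd_def)
  qed (auto simp: rho_def rd_def algebra_simps)
qed

lemma rho_hom: "0 \<le> c \<Longrightarrow> rho ap am (c * t) = c * rho ap am t"
  by (cases "c = 0") (auto simp: rho_def zero_le_mult_iff)

lemma rd_hom: "0 \<le> c \<Longrightarrow> rd ap am z (c * t) = c * rd ap am z t"
  by (auto simp: rd_def rho_hom)

lemma rd_scale: "0 < b \<Longrightarrow> rd ap am (b * z) t = rd ap am z t"
  by (auto simp: rd_def zero_less_mult_iff mult_less_0_iff)

lemma rd_rad: "rd ap am z (a * z + t) = a * rho ap am z + rd ap am z t"
  by (auto simp: rd_def rho_def algebra_simps)

lemma rd_zero [simp]: "rd ap am z 0 = 0"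
  by (simp add: rd_def rho_def)

lemma rd_cone: "(s \<longrightarrow> 0 \<le> t) \<Longrightarrow> (\<not> s \<longrightarrow> t \<le> 0) \<Longrightarrow>
   rd ap am z t = (if z > 0 then ap else if z < 0 then am else if s then ap else am) * t"
  by (auto simp: rd_def rho_def)

context
  fixes ap am :: real and x :: "'k \<Rightarrow> real^'d" and y :: "'k \<Rightarrow> 'j \<Rightarrow> real"
    and K :: "'k set" and J :: "'j set"
begin

definition Gf :: "'h set \<Rightarrow> ('h \<Rightarrow> real^'d) \<Rightarrow> ('j \<Rightarrow> 'h \<Rightarrow> real) \<Rightarrow> 'h \<Rightarrow> 'j \<Rightarrow> real" where
  "Gf H w h i j = (\<Sum>k\<in>K. err ap am x y H w h k j * rho ap am (w i \<bullet> x k))"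

definition Phi :: "'h set \<Rightarrow> ('h \<Rightarrow> real^'d) \<Rightarrow> ('j \<Rightarrow> 'h \<Rightarrow> real) \<Rightarrow> 'h \<Rightarrow> 'j \<Rightarrow> real^'d \<Rightarrow> real" where
  "Phi H w h i j u = (\<Sum>k\<in>K. err ap am x y H w h k j * rd ap am (w i \<bullet> x k) (u \<bullet> x k))"

definition Dd :: "'h set \<Rightarrow> ('h \<Rightarrow> real^'d) \<Rightarrow> ('j \<Rightarrow> 'h \<Rightarrow> real) \<Rightarrow> ('h \<Rightarrow> real^'d) \<Rightarrow> ('j \<Rightarrow> 'h \<Rightarrow> real) \<Rightarrow> real" where
  "Dd H w h dw dh = (\<Sum>i\<in>H. \<Sum>j\<in>J. dh j i * Gf H w h i j + h j i * Phi H w h i j (dw i))"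

lemma sum_rearr:
  "(\<Sum>k\<in>K. \<Sum>j\<in>J. err ap am x y H w h k j *
      (\<Sum>i\<in>H. A i j * rho ap am (w i \<bullet> x k) + B i j * rd ap am (w i \<bullet> x k) (D i \<bullet> x k)))
   = (\<Sum>i\<in>H. \<Sum>j\<in>J. A i j * Gf H w h i j + B i j * Phi H w h i j (D i))"
proof -
  have "(\<Sum>k\<in>K. \<Sum>j\<in>J. err ap am x y H w h k j *
      (\<Sum>i\<in>H. A i j * rho ap am (w i \<bullet> x k) + B i j * rd ap am (w i \<bullet> x k) (D i \<bullet> x k)))
    = (\<Sum>k\<in>K. \<Sum>j\<in>J. \<Sum>i\<in>H. A i j * (err ap am x y H w h k j * rho ap am (w i \<bullet> x k))
         + B i j * (err ap am x y H w h k j * rd ap am (w i \<bullet> x k) (D i \<bullet> x k)))"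
    by (simp add: sum_distrib_left algebra_simps)
  also have "\<dots> = (\<Sum>j\<in>J. \<Sum>k\<in>K. \<Sum>i\<in>H. A i j * (err ap am x y H w h k j * rho ap am (w i \<bullet> x k))
         + B i j * (err ap am x y H w h k j * rd ap am (w i \<bullet> x k) (D i \<bullet> x k)))"
    by (rule sum.swap)
  also have "\<dots> = (\<Sum>j\<in>J. \<Sum>i\<in>H. \<Sum>k\<in>K. A i j * (err ap am x y H w h k j * rho ap am (w i \<bullet> x k))
         + B i j * (err ap am x y H w h k j * rd ap am (w i \<bullet> x k) (D i \<bullet> x k)))"
    by (intro sum.cong refl sum.swap)
  also have "\<dots> = (\<Sum>i\<in>H. \<Sum>j\<in>J. \<Sum>k\<in>K. A i j * (err ap am x y H w h k j * rho ap am (w i \<bullet> x k))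
         + B i j * (err ap am x y H w h k j * rd ap am (w i \<bullet> x k) (D i \<bullet> x k)))"
    by (rule sum.swap)
  also have "\<dots> = (\<Sum>i\<in>H. \<Sum>j\<in>J. A i j * Gf H w h i j + B i j * Phi H w h i j (D i))"
    by (simp add: Gf_def Phi_def sum.distrib sum_distrib_left)
  finally show ?thesis .
qed

lemma out_pert:
  assumes "\<forall>i\<in>H. rho ap am (w' i \<bullet> xx) = rho ap am (w i \<bullet> xx) + rd ap am (w i \<bullet> xx) (D i \<bullet> xx)"
  shows "out ap am H w' h' xx j = out ap am H w h xx j +
     (\<Sum>i\<in>H. (h' j i - h j i) * rho ap am (w i \<bullet> xx) + h' j i * rd ap am (w i \<bullet> xx) (D i \<bullet> xx))"
proof -
  have "out ap am H w' h' xx j = (\<Sum>i\<in>H. h j i * rho ap am (w i \<bullet> xx) +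
     ((h' j i - h j i) * rho ap am (w i \<bullet> xx) + h' j i * rd ap am (w i \<bullet> xx) (D i \<bullet> xx)))"
    unfolding out_def using assms by (intro sum.cong refl) (simp add: algebra_simps)
  thus ?thesis by (simp add: sum.distrib out_def)
qed

lemma loss_diff:
  assumes "\<forall>k\<in>K. \<forall>j\<in>J. err ap am x y H w' h' k j = err ap am x y H w h k j + Dl k j"
  shows "loss ap am x y K J H w' h' - loss ap am x y K J H w h =
     (\<Sum>k\<in>K. \<Sum>j\<in>J. err ap am x y H w h k j * Dl k j + (Dl k j)\<^sup>2 / 2)"
proof -
  have "loss ap am x y K J H w' h' = (1/2) * (\<Sum>k\<in>K. \<Sum>j\<in>J. (err ap am x y H w h k j + Dl k j)\<^sup>2)"
    unfolding loss_def using assms by (intro arg_cong[where f="\<lambda>t. (1/2) * t"] sum.cong refl) auto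
  hence "loss ap am x y K J H w' h' - loss ap am x y K J H w h =
     (\<Sum>k\<in>K. \<Sum>j\<in>J. (1/2) * (err ap am x y H w h k j + Dl k j)\<^sup>2 - (1/2) * (err ap am x y H w h k j)\<^sup>2)"
    unfolding loss_def by (simp add: sum_distrib_left sum_subtractf)
  also have "\<dots> = (\<Sum>k\<in>K. \<Sum>j\<in>J. err ap am x y H w h k j * Dl k j + (Dl k j)\<^sup>2 / 2)"
    by (intro sum.cong refl) (simp add: power2_eq_square algebra_simps)
  finally show ?thesis .
qed


lemma loss_dir:
  assumes fH: "finite H" and fK: "finite K" and fJ: "finite J"
  shows "((\<lambda>\<alpha>. (loss ap am x y K J H (\<lambda>i. w i + \<alpha> *\<^sub>R dw i) (\<lambda>j i. h j i + \<alpha> * dh j i)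
                 - loss ap am x y K J H w h) / \<alpha>) \<longlongrightarrow> Dd H w h dw dh) (at_right 0)"
proof -
  define e where "e k j = err ap am x y H w h k j" for k j
  define E where "E \<alpha> k j = (\<Sum>i\<in>H. dh j i * rho ap am (w i \<bullet> x k) + (h j i + \<alpha> * dh j i) * rd ap am (w i \<bullet> x k) (dw i \<bullet> x k))" for \<alpha> k j
  define q where "q \<alpha> = (\<Sum>k\<in>K. \<Sum>j\<in>J. e k j * E \<alpha> k j + \<alpha> * ((E \<alpha> k j)\<^sup>2 / 2))" for \<alpha>
  have evp: "\<forall>p\<in>H \<times> K. eventually (\<lambda>\<alpha>. rho ap am ((w (fst p) + \<alpha> *\<^sub>R dw (fst p)) \<bullet> x (snd p)) =
      rho ap am (w (fst p) \<bullet> x (snd p)) + rd ap am (w (fst p) \<bullet> x (snd p)) ((\<alpha> *\<^sub>R dw (fst p)) \<bullet> x (snd p))) (at_right 0)"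
  proof
    fix p assume "p \<in> H \<times> K"
    define z where "z = w (fst p) \<bullet> x (snd p)"
    define t where "t = dw (fst p) \<bullet> x (snd p)"
    define b where "b = (if z = 0 then 1 else \<bar>z\<bar> / (\<bar>t\<bar> + 1))"
    have bpos: "b > 0" unfolding b_def by (auto intro: divide_pos_pos add_pos_nonneg)
    have "rho ap am (z + \<alpha> * t) = rho ap am z + rd ap am z (\<alpha> * t)" if "0 < \<alpha>" "\<alpha> < b" for \<alpha>
    proof (rule rho_add, intro impI)
      assume z: "z \<noteq> 0"
      have "\<alpha> * (\<bar>t\<bar> + 1) \<le> b * (\<bar>t\<bar> + 1)" using that by (intro mult_right_mono) auto
      also have "\<dots> = \<bar>z\<bar>" using z unfolding b_def by (simp add: add_pos_nonneg)
      finally have "\<alpha> * \<bar>t\<bar> \<le> \<bar>z\<bar>" using that by (simp add: algebra_simps)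
      thus "\<bar>\<alpha> * t\<bar> \<le> \<bar>z\<bar>" using that by (simp add: abs_mult)
    qed
    hence "eventually (\<lambda>\<alpha>. rho ap am (z + \<alpha> * t) = rho ap am z + rd ap am z (\<alpha> * t)) (at_right 0)"
      unfolding eventually_at_right_field using bpos by auto
    thus "eventually (\<lambda>\<alpha>. rho ap am ((w (fst p) + \<alpha> *\<^sub>R dw (fst p)) \<bullet> x (snd p)) =
      rho ap am (w (fst p) \<bullet> x (snd p)) + rd ap am (w (fst p) \<bullet> x (snd p)) ((\<alpha> *\<^sub>R dw (fst p)) \<bullet> x (snd p))) (at_right 0)"
      unfolding z_def t_def by (simp add: inner_add_left)
  qed
  have ev: "eventually (\<lambda>\<alpha>. \<forall>p\<in>H \<times> K. rho ap am ((w (fst p) + \<alpha> *\<^sub>R dw (fst p)) \<bullet> x (snd p)) =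
      rho ap am (w (fst p) \<bullet> x (snd p)) + rd ap am (w (fst p) \<bullet> x (snd p)) ((\<alpha> *\<^sub>R dw (fst p)) \<bullet> x (snd p))) (at_right 0)"
    by (rule eventually_ball_finite) (use fH fK evp in auto)
  have pos: "eventually (\<lambda>\<alpha>. 0 < \<alpha>) (at_right (0::real))"
    unfolding eventually_at_right_field by (intro exI[of _ 1]) auto
  have eq: "eventually (\<lambda>\<alpha>. (loss ap am x y K J H (\<lambda>i. w i + \<alpha> *\<^sub>R dw i) (\<lambda>j i. h j i + \<alpha> * dh j i)
                 - loss ap am x y K J H w h) / \<alpha> = q \<alpha>) (at_right 0)"
    using ev pos
  proof eventually_elim
    case (elim \<alpha>)
    have "\<forall>k\<in>K. \<forall>j\<in>J. err ap am x y H (\<lambda>i. w i + \<alpha> *\<^sub>R dw i) (\<lambda>j i. h j i + \<alpha> * dh j i) k j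
        = err ap am x y H w h k j + \<alpha> * E \<alpha> k j"
    proof (intro ballI)
      fix k j assume k: "k \<in> K" and j: "j \<in> J"
      have "out ap am H (\<lambda>i. w i + \<alpha> *\<^sub>R dw i) (\<lambda>j i. h j i + \<alpha> * dh j i) (x k) j =
         out ap am H w h (x k) j + (\<Sum>i\<in>H. (h j i + \<alpha> * dh j i - h j i) * rho ap am (w i \<bullet> x k) +
            (h j i + \<alpha> * dh j i) * rd ap am (w i \<bullet> x k) ((\<alpha> *\<^sub>R dw i) \<bullet> x k))"
        by (rule out_pert) (use elim k in auto)
      also have "(\<Sum>i\<in>H. (h j i + \<alpha> * dh j i - h j i) * rho ap am (w i \<bullet> x k) +
            (h j i + \<alpha> * dh j i) * rd ap am (w i \<bullet> x k) ((\<alpha> *\<^sub>R dw i) \<bullet> x k)) = \<alpha> * E \<alpha> k j"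
        unfolding E_def sum_distrib_left
        by (intro sum.cong refl) (use elim in \<open>simp add: rd_hom algebra_simps\<close>)
      finally show "err ap am x y H (\<lambda>i. w i + \<alpha> *\<^sub>R dw i) (\<lambda>j i. h j i + \<alpha> * dh j i) k j
        = err ap am x y H w h k j + \<alpha> * E \<alpha> k j" by (simp add: err_def)
    qed
    from loss_diff[OF this]
    have "loss ap am x y K J H (\<lambda>i. w i + \<alpha> *\<^sub>R dw i) (\<lambda>j i. h j i + \<alpha> * dh j i) - loss ap am x y K J H w h
      = (\<Sum>k\<in>K. \<Sum>j\<in>J. e k j * (\<alpha> * E \<alpha> k j) + (\<alpha> * E \<alpha> k j)\<^sup>2 / 2)" unfolding e_def .
    also have "\<dots> = \<alpha> * q \<alpha>" unfolding q_def sum_distrib_left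
      by (intro sum.cong refl) (simp add: power2_eq_square algebra_simps)
    finally show ?case using elim by simp
  qed
  have "(q \<longlongrightarrow> q 0) (at_right 0)" unfolding q_def E_def
    by (intro tendsto_intros tendsto_ident_at) auto
  hence "(q \<longlongrightarrow> Dd H w h dw dh) (at_right 0)"
    unfolding q_def E_def e_def Dd_def using sum_rearr[of H w h "\<lambda>i j. dh j i" "\<lambda>i j. h j i" dw] by simp
  thus ?thesis by (subst tendsto_cong[OF eq])
qed

lemma stationary_Dd:
  assumes "finite H" "finite K" "finite J"
  shows "stationary ap am x y K J H w h \<longleftrightarrow> (\<forall>dw dh. 0 \<le> Dd H w h dw dh)"
proof
  assume st: "stationary ap am x y K J H w h"
  show "\<forall>dw dh. 0 \<le> Dd H w h dw dh"
  proof (intro allI)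
    fix dw dh
    obtain D where D: "D \<ge> 0" "((\<lambda>\<alpha>. (loss ap am x y K J H (\<lambda>i. w i + \<alpha> *\<^sub>R dw i) (\<lambda>j i. h j i + \<alpha> * dh j i)
                 - loss ap am x y K J H w h) / \<alpha>) \<longlongrightarrow> D) (at_right 0)"
      using st unfolding stationary_def by blast
    have "D = Dd H w h dw dh" using tendsto_unique[OF trivial_limit_at_right_real D(2) loss_dir[OF assms]] .
    thus "0 \<le> Dd H w h dw dh" using D by simp
  qed
next
  assume "\<forall>dw dh. 0 \<le> Dd H w h dw dh"
  thus "stationary ap am x y K J H w h" unfolding stationary_def using loss_dir[OF assms] by blast
qed

lemma Phi_0 [simp]: "Phi H w h i j 0 = 0"
  by (simp add: Phi_def)

lemma stationary_char:
  assumes fH: "finite H" and fK: "finite K" and fJ: "finite J"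
  shows "stationary ap am x y K J H w h \<longleftrightarrow>
    (\<forall>i\<in>H. (\<forall>j\<in>J. Gf H w h i j = 0) \<and> (\<forall>u. 0 \<le> (\<Sum>j\<in>J. h j i * Phi H w h i j u)))"
proof -
  have "(\<forall>dw dh. 0 \<le> Dd H w h dw dh) \<longleftrightarrow>
    (\<forall>i\<in>H. (\<forall>j\<in>J. Gf H w h i j = 0) \<and> (\<forall>u. 0 \<le> (\<Sum>j\<in>J. h j i * Phi H w h i j u)))"
  proof
    assume A: "\<forall>dw dh. 0 \<le> Dd H w h dw dh"
    show "\<forall>i\<in>H. (\<forall>j\<in>J. Gf H w h i j = 0) \<and> (\<forall>u. 0 \<le> (\<Sum>j\<in>J. h j i * Phi H w h i j u))"
    proof (intro ballI conjI allI)
      fix i j assume i: "i \<in> H" and j: "j \<in> J"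
      have "0 \<le> Dd H w h (\<lambda>_. 0) (\<lambda>j' i'. if j' = j \<and> i' = i then c else 0)" for c using A by blast
      moreover have "Dd H w h (\<lambda>_. 0) (\<lambda>j' i'. if j' = j \<and> i' = i then c else 0) = c * Gf H w h i j" for c
      proof -
        have "Dd H w h (\<lambda>_. 0) (\<lambda>j' i'. if j' = j \<and> i' = i then c else 0) =
           (\<Sum>i'\<in>H. \<Sum>j'\<in>J. (if i' = i then (if j' = j then c * Gf H w h i j else 0) else 0))"
          unfolding Dd_def by (intro sum.cong refl) auto
        also have "\<dots> = (\<Sum>i'\<in>H. if i' = i then (\<Sum>j'\<in>J. if j' = j then c * Gf H w h i j else 0) else 0)"
          by (intro sum.cong refl) auto
        also have "\<dots> = c * Gf H w h i j" using i j fH fJ by (simp add: sum.delta)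
        finally show ?thesis .
      qed
      ultimately have "0 \<le> c * Gf H w h i j" for c by metis
      from this[of 1] this[of "-1"] show "Gf H w h i j = 0" by simp
    next
      fix i u assume i: "i \<in> H"
      have "0 \<le> Dd H w h (\<lambda>i'. if i' = i then u else 0) (\<lambda>_ _. 0)" using A by blast
      moreover have "Dd H w h (\<lambda>i'. if i' = i then u else 0) (\<lambda>_ _. 0) =
          (\<Sum>i'\<in>H. if i' = i then (\<Sum>j\<in>J. h j i * Phi H w h i j u) else 0)"
        unfolding Dd_def by (intro sum.cong refl) auto
      ultimately show "0 \<le> (\<Sum>j\<in>J. h j i * Phi H w h i j u)" using i fH by (simp add: sum.delta)
    qed
  next
    assume B: "\<forall>i\<in>H. (\<forall>j\<in>J. Gf H w h i j = 0) \<and> (\<forall>u. 0 \<le> (\<Sum>j\<in>J. h j i * Phi H w h i j u))"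
    show "\<forall>dw dh. 0 \<le> Dd H w h dw dh"
    proof (intro allI)
      fix dw dh
      have "Dd H w h dw dh = (\<Sum>i\<in>H. \<Sum>j\<in>J. h j i * Phi H w h i j (dw i))"
        unfolding Dd_def using B by (intro sum.cong refl) auto
      also have "\<dots> \<ge> 0" by (rule sum_nonneg) (use B in blast)
      finally show "0 \<le> Dd H w h dw dh" .
    qed
  qed
  thus ?thesis using stationary_Dd[OF assms] by simp
qed


lemma dvec_inner:
  assumes fK: "finite K"
  shows "dvec ap am x y K J H w h i j v \<bullet> v = Phi H w h i j v"
proof -
  define e where "e k = err ap am x y H w h k j" for k
  define Sp where "Sp = {k\<in>K. 0 < w i \<bullet> x k \<or> (w i \<bullet> x k = 0 \<and> 0 < v \<bullet> x k)}"
  define Sm where "Sm = {k\<in>K. w i \<bullet> x k < 0 \<or> (w i \<bullet> x k = 0 \<and> v \<bullet> x k < 0)}"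
  define C where "C = (\<Sum>k\<in>Sp. (ap * e k) *\<^sub>R x k) + (\<Sum>k\<in>Sm. (am * e k) *\<^sub>R x k)"
  have evk: "\<forall>k\<in>K. eventually (\<lambda>\<Delta>. (0 < (w i + \<Delta> *\<^sub>R v) \<bullet> x k \<longleftrightarrow> k \<in> Sp) \<and>
        ((w i + \<Delta> *\<^sub>R v) \<bullet> x k < 0 \<longleftrightarrow> k \<in> Sm)) (at_right 0)"
  proof
    fix k assume k: "k \<in> K"
    define z where "z = w i \<bullet> x k"
    define t where "t = v \<bullet> x k"
    define b where "b = (if z = 0 then 1 else \<bar>z\<bar> / (\<bar>t\<bar> + 1))"
    have bpos: "b > 0" unfolding b_def by (auto intro: divide_pos_pos add_pos_nonneg)
    have "(0 < z + \<Delta> * t \<longleftrightarrow> (0 < z \<or> (z = 0 \<and> 0 < t))) \<and> (z + \<Delta> * t < 0 \<longleftrightarrow> (z < 0 \<or> (z = 0 \<and> t < 0)))"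
      if "0 < \<Delta>" "\<Delta> < b" for \<Delta>
    proof (cases "z = 0")
      case True
      thus ?thesis using that by (simp add: zero_less_mult_iff mult_less_0_iff)
    next
      case False
      have "\<Delta> * (\<bar>t\<bar> + 1) < b * (\<bar>t\<bar> + 1)" using that by (intro mult_strict_right_mono) auto
      also have "\<dots> = \<bar>z\<bar>" using False unfolding b_def by (simp add: add_pos_nonneg)
      finally have "\<Delta> * \<bar>t\<bar> < \<bar>z\<bar>" using that by (simp add: algebra_simps)
      hence "\<bar>\<Delta> * t\<bar> < \<bar>z\<bar>" using that by (simp add: abs_mult)
      thus ?thesis using False by (auto simp: abs_if split: if_splits)
    qed
    hence "eventually (\<lambda>\<Delta>. (0 < z + \<Delta> * t \<longleftrightarrow> (0 < z \<or> (z = 0 \<and> 0 < t))) \<and> (z + \<Delta> * t < 0 \<longleftrightarrow> (z < 0 \<or> (z = 0 \<and> t < 0)))) (at_right 0)"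
      unfolding eventually_at_right_field using bpos by auto
    thus "eventually (\<lambda>\<Delta>. (0 < (w i + \<Delta> *\<^sub>R v) \<bullet> x k \<longleftrightarrow> k \<in> Sp) \<and>
        ((w i + \<Delta> *\<^sub>R v) \<bullet> x k < 0 \<longleftrightarrow> k \<in> Sm)) (at_right 0)"
      unfolding z_def t_def Sp_def Sm_def using k by (simp add: inner_add_left)
  qed
  have ev: "eventually (\<lambda>\<Delta>. \<forall>k\<in>K. (0 < (w i + \<Delta> *\<^sub>R v) \<bullet> x k \<longleftrightarrow> k \<in> Sp) \<and>
        ((w i + \<Delta> *\<^sub>R v) \<bullet> x k < 0 \<longleftrightarrow> k \<in> Sm)) (at_right 0)"
    by (rule eventually_ball_finite[OF fK evk])
  have "eventually (\<lambda>\<Delta>. (\<Sum>k\<in>{k\<in>K. (w i + \<Delta> *\<^sub>R v) \<bullet> x k > 0}. (ap * err ap am x y H w h k j) *\<^sub>R x k)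
         + (\<Sum>k\<in>{k\<in>K. (w i + \<Delta> *\<^sub>R v) \<bullet> x k < 0}. (am * err ap am x y H w h k j) *\<^sub>R x k) = C) (at_right 0)"
    using ev
  proof eventually_elim
    case (elim \<Delta>)
    have "{k\<in>K. (w i + \<Delta> *\<^sub>R v) \<bullet> x k > 0} = Sp" using elim unfolding Sp_def by auto
    moreover have "{k\<in>K. (w i + \<Delta> *\<^sub>R v) \<bullet> x k < 0} = Sm" using elim unfolding Sm_def by auto
    ultimately show ?case unfolding C_def e_def by simp
  qed
  hence "dvec ap am x y K J H w h i j v = C" unfolding dvec_def
    by (intro tendsto_Lim trivial_limit_at_right_real tendsto_eventually)
  moreover have "C \<bullet> v = Phi H w h i j v"
  proof -
    have "C \<bullet> v = (\<Sum>k\<in>Sp. ap * e k * (x k \<bullet> v)) + (\<Sum>k\<in>Sm. am * e k * (x k \<bullet> v))"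
      unfolding C_def by (simp add: inner_add_left inner_sum_left)
    also have "\<dots> = (\<Sum>k\<in>K. (if 0 < w i \<bullet> x k \<or> (w i \<bullet> x k = 0 \<and> 0 < v \<bullet> x k) then ap * e k * (x k \<bullet> v) else 0)
        + (if w i \<bullet> x k < 0 \<or> (w i \<bullet> x k = 0 \<and> v \<bullet> x k < 0) then am * e k * (x k \<bullet> v) else 0))"
      unfolding Sp_def Sm_def using fK by (simp add: sum.inter_filter sum.distrib)
    also have "\<dots> = (\<Sum>k\<in>K. e k * rd ap am (w i \<bullet> x k) (v \<bullet> x k))"
      by (intro sum.cong refl) (auto simp: rd_def rho_def inner_commute)
    finally show ?thesis unfolding Phi_def e_def .
  qed
  ultimately show ?thesis by simp
qed

lemma tderiv_eq: "finite K \<Longrightarrow> tderiv ap am x y K J H w h i v = (\<Sum>j\<in>J. h j i * Phi H w h i j v)"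
  by (simp add: tderiv_def dvec_inner)

lemma escape_iff: "finite K \<Longrightarrow> escape ap am x y K J H w h i \<longleftrightarrow>
   (\<exists>j'\<in>J. \<exists>v. tangential (w i) v \<and> (\<Sum>j\<in>J. h j i * Phi H w h i j v) = 0 \<and> Phi H w h i j' v \<noteq> 0)"
  by (simp add: escape_def tderiv_eq dvec_inner)

lemma Phi_lin: "Phi H w h i j (a *\<^sub>R w i + r) = a * Gf H w h i j + Phi H w h i j r"
  unfolding Phi_def Gf_def inner_add_left inner_scaleR_left rd_rad
  by (simp add: sum_distrib_left sum.distrib algebra_simps)

lemma Phi_hom: "0 \<le> c \<Longrightarrow> Phi H w h i j (c *\<^sub>R r) = c * Phi H w h i j r"
  unfolding Phi_def by (simp add: rd_hom sum_distrib_left algebra_simps)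

lemma Phi_radial:
  assumes G: "\<forall>j\<in>J. Gf H w h i j = 0"
  shows "(\<forall>j\<in>J. Phi H w h i j u = 0) \<or>
     (\<exists>c>0. \<exists>v. tangential (w i) v \<and> (\<forall>j\<in>J. Phi H w h i j u = c * Phi H w h i j v))"
proof -
  define a where "a = (if w i = 0 then 0 else (u \<bullet> w i) / (w i \<bullet> w i))"
  define r where "r = u - a *\<^sub>R w i"
  have u: "u = a *\<^sub>R w i + r" unfolding r_def by simp
  have rw: "w i \<bullet> r = 0" unfolding r_def a_def by (auto simp: inner_diff_right inner_commute)
  have Pr: "\<forall>j\<in>J. Phi H w h i j u = Phi H w h i j r" using G by (subst u, simp add: Phi_lin)
  show ?thesis
  proof (cases "r = 0")
    case True thus ?thesis using Pr by simp
  next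
    case False
    define v where "v = (1 / norm r) *\<^sub>R r"
    have "tangential (w i) v" unfolding tangential_def v_def using False rw by (simp add: inner_scaleR_right)
    moreover have "r = norm r *\<^sub>R v" unfolding v_def using False by simp
    hence "\<forall>j\<in>J. Phi H w h i j u = norm r * Phi H w h i j v" using Pr
      by (metis Phi_hom norm_ge_zero)
    moreover have "norm r > 0" using False by simp
    ultimately show ?thesis by blast
  qed
qed


lemma pw_bound:
  fixes z :: "'k \<Rightarrow> real" and c :: "'j \<Rightarrow> 'k \<Rightarrow> real" and hh :: "'j \<Rightarrow> real"
  assumes fK: "finite K" and fJ: "finite J"
    and nn: "\<forall>u. 0 \<le> (\<Sum>j\<in>J. hh j * (\<Sum>k\<in>K. c j k * rd ap am (z k) (u \<bullet> x k)))"
    and zz: "\<forall>u. (\<Sum>j\<in>J. hh j * (\<Sum>k\<in>K. c j k * rd ap am (z k) (u \<bullet> x k))) = 0 \<longrightarrow>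
               (\<forall>j\<in>J. (\<Sum>k\<in>K. c j k * rd ap am (z k) (u \<bullet> x k)) = 0)"
  shows "\<exists>M\<ge>0. \<forall>u. \<forall>j\<in>J. \<bar>\<Sum>k\<in>K. c j k * rd ap am (z k) (u \<bullet> x k)\<bar>
            \<le> M * (\<Sum>j\<in>J. hh j * (\<Sum>k\<in>K. c j k * rd ap am (z k) (u \<bullet> x k)))"
proof -
  define P where "P j u = (\<Sum>k\<in>K. c j k * rd ap am (z k) (u \<bullet> x k))" for j u
  define F where "F u = (\<Sum>j\<in>J. hh j * P j u)" for u
  define sl where "sl S k = (if z k > 0 then ap else if z k < 0 then am else if k \<in> S then ap else am)" for S k
  define A where "A S j = (\<Sum>k\<in>K. (c j k * sl S k) *\<^sub>R x k)" for S j
  define Fa where "Fa S = (\<Sum>j\<in>J. hh j *\<^sub>R A S j)" for S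
  define bb where "bb S k = (if k \<in> S then x k else - x k)" for S k
  have Pcone: "P j u = A S j \<bullet> u" if cone: "\<forall>k\<in>K. 0 \<le> bb S k \<bullet> u" for S j u
  proof -
    have "rd ap am (z k) (u \<bullet> x k) = sl S k * (u \<bullet> x k)" if k: "k \<in> K" for k
      unfolding sl_def
    proof (rule rd_cone)
      show "k \<in> S \<longrightarrow> 0 \<le> u \<bullet> x k" using cone k unfolding bb_def by (auto simp: inner_commute)
      show "k \<notin> S \<longrightarrow> u \<bullet> x k \<le> 0" using cone k unfolding bb_def by (auto simp: inner_commute)
    qed
    hence "P j u = (\<Sum>k\<in>K. c j k * (sl S k * (u \<bullet> x k)))" unfolding P_def by simp
    also have "\<dots> = A S j \<bullet> u" unfolding A_def by (simp add: inner_sum_left inner_commute[of u] algebra_simps)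
    finally show ?thesis .
  qed
  have Fcone: "F u = Fa S \<bullet> u" if "\<forall>k\<in>K. 0 \<le> bb S k \<bullet> u" for S u
    unfolding F_def Fa_def using Pcone[OF that] by (simp add: inner_sum_left)
  have "\<forall>p\<in>Pow K \<times> J. \<exists>M. \<forall>u. (\<forall>k\<in>K. 0 \<le> bb (fst p) k \<bullet> u) \<longrightarrow> \<bar>A (fst p) (snd p) \<bullet> u\<bar> \<le> M * (Fa (fst p) \<bullet> u)"
  proof
    fix p assume "p \<in> Pow K \<times> J"
    hence j: "snd p \<in> J" by auto
    have "\<exists>M. \<forall>u\<in>UNIV. (\<forall>k\<in>K. 0 \<le> bb (fst p) k \<bullet> u) \<longrightarrow> \<bar>A (fst p) (snd p) \<bullet> u\<bar> \<le> M * (Fa (fst p) \<bullet> u)"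
    proof (rule cone_bound[OF subspace_UNIV fK])
      show "\<forall>u\<in>UNIV. (\<forall>k\<in>K. 0 \<le> bb (fst p) k \<bullet> u) \<longrightarrow> 0 \<le> Fa (fst p) \<bullet> u"
      proof (intro ballI impI)
        fix u :: "real^'d" assume c: "\<forall>k\<in>K. 0 \<le> bb (fst p) k \<bullet> u"
        have "0 \<le> F u" using nn unfolding F_def P_def by blast
        thus "0 \<le> Fa (fst p) \<bullet> u" using Fcone[OF c] by simp
      qed
      show "\<forall>u\<in>UNIV. (\<forall>k\<in>K. 0 \<le> bb (fst p) k \<bullet> u) \<longrightarrow> Fa (fst p) \<bullet> u = 0 \<longrightarrow> A (fst p) (snd p) \<bullet> u = 0"
      proof (intro ballI impI)
        fix u :: "real^'d" assume c: "\<forall>k\<in>K. 0 \<le> bb (fst p) k \<bullet> u" and "Fa (fst p) \<bullet> u = 0"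
        hence "F u = 0" using Fcone by simp
        hence "P (snd p) u = 0" using zz j unfolding F_def P_def by blast
        thus "A (fst p) (snd p) \<bullet> u = 0" using Pcone[OF c] by simp
      qed
    qed
    thus "\<exists>M. \<forall>u. (\<forall>k\<in>K. 0 \<le> bb (fst p) k \<bullet> u) \<longrightarrow> \<bar>A (fst p) (snd p) \<bullet> u\<bar> \<le> M * (Fa (fst p) \<bullet> u)" by simp
  qed
  then obtain Mf where Mf: "\<forall>p\<in>Pow K \<times> J. \<forall>u. (\<forall>k\<in>K. 0 \<le> bb (fst p) k \<bullet> u) \<longrightarrow>
      \<bar>A (fst p) (snd p) \<bullet> u\<bar> \<le> Mf p * (Fa (fst p) \<bullet> u)"
    by (metis (no_types, lifting) bchoice)
  define Mt where "Mt = (\<Sum>p\<in>Pow K \<times> J. \<bar>Mf p\<bar>)"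
  have fin: "finite (Pow K \<times> J)" using fK fJ by simp
  have "\<bar>P j u\<bar> \<le> Mt * F u" if j: "j \<in> J" for j u
  proof -
    define S where "S = {k\<in>K. 0 \<le> u \<bullet> x k}"
    have cone: "\<forall>k\<in>K. 0 \<le> bb S k \<bullet> u" unfolding S_def bb_def by (auto simp: inner_commute)
    have p: "(S, j) \<in> Pow K \<times> J" using j unfolding S_def by auto
    have F0: "0 \<le> F u" using nn unfolding F_def P_def by blast
    have "\<bar>P j u\<bar> = \<bar>A S j \<bullet> u\<bar>" using Pcone[OF cone] by simp
    also have "\<dots> \<le> Mf (S, j) * F u" using Mf p cone Fcone[OF cone] by fastforce
    also have "\<dots> \<le> \<bar>Mf (S, j)\<bar> * F u" using F0 by (intro mult_right_mono) auto
    also have "\<dots> \<le> Mt * F u" unfolding Mt_def using F0 fin p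
      by (intro mult_right_mono member_le_sum) auto
    finally show ?thesis .
  qed
  moreover have "Mt \<ge> 0" unfolding Mt_def by (intro sum_nonneg) auto
  ultimately show ?thesis unfolding P_def F_def by blast
qed


lemma noescape_zero:
  assumes fH: "finite H" and fK: "finite K" and fJ: "finite J"
    and st: "stationary ap am x y K J H w h" and ne: "\<not> escape ap am x y K J H w h i" and i: "i \<in> H"
  shows "(\<Sum>j\<in>J. h j i * Phi H w h i j u) = 0 \<longrightarrow> (\<forall>j\<in>J. Phi H w h i j u = 0)"
proof
  assume F0: "(\<Sum>j\<in>J. h j i * Phi H w h i j u) = 0"
  have G: "\<forall>j\<in>J. Gf H w h i j = 0" using st i stationary_char[OF fH fK fJ] by blast
  from Phi_radial[OF G, of u] show "\<forall>j\<in>J. Phi H w h i j u = 0"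
  proof
    assume "\<exists>c>0. \<exists>v. tangential (w i) v \<and> (\<forall>j\<in>J. Phi H w h i j u = c * Phi H w h i j v)"
    then obtain c v where c: "c > 0" "tangential (w i) v" "\<forall>j\<in>J. Phi H w h i j u = c * Phi H w h i j v" by blast
    have "(\<Sum>j\<in>J. h j i * Phi H w h i j u) = c * (\<Sum>j\<in>J. h j i * Phi H w h i j v)"
      using c(3) by (simp add: sum_distrib_left algebra_simps)
    hence Fv: "(\<Sum>j\<in>J. h j i * Phi H w h i j v) = 0" using F0 c(1) by simp
    have "\<forall>j\<in>J. Phi H w h i j v = 0" using ne Fv c(2) unfolding escape_iff[OF fK] by blast
    thus ?thesis using c(3) by simp
  qed
qed

lemma local_min_noescape:
  assumes fH: "finite H" and fK: "finite K" and fJ: "finite J"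
    and st: "stationary ap am x y K J H w h" and ne: "\<forall>i\<in>H. \<not> escape ap am x y K J H w h i"
  shows "local_min ap am x y K J H w h"
proof -
  have sc: "\<forall>i\<in>H. (\<forall>j\<in>J. Gf H w h i j = 0) \<and> (\<forall>u. 0 \<le> (\<Sum>j\<in>J. h j i * Phi H w h i j u))"
    using st stationary_char[OF fH fK fJ] by blast
  have "\<forall>i\<in>H. \<exists>M\<ge>0. \<forall>u. \<forall>j\<in>J. \<bar>Phi H w h i j u\<bar> \<le> M * (\<Sum>j\<in>J. h j i * Phi H w h i j u)"
  proof
    fix i assume i: "i \<in> H"
    have "\<exists>M\<ge>0. \<forall>u. \<forall>j\<in>J. \<bar>\<Sum>k\<in>K. err ap am x y H w h k j * rd ap am (w i \<bullet> x k) (u \<bullet> x k)\<bar>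
            \<le> M * (\<Sum>j\<in>J. h j i * (\<Sum>k\<in>K. err ap am x y H w h k j * rd ap am (w i \<bullet> x k) (u \<bullet> x k)))"
    proof (rule pw_bound[OF fK fJ])
      show "\<forall>u. 0 \<le> (\<Sum>j\<in>J. h j i * (\<Sum>k\<in>K. err ap am x y H w h k j * rd ap am (w i \<bullet> x k) (u \<bullet> x k)))"
        using sc i unfolding Phi_def by blast
      show "\<forall>u. (\<Sum>j\<in>J. h j i * (\<Sum>k\<in>K. err ap am x y H w h k j * rd ap am (w i \<bullet> x k) (u \<bullet> x k))) = 0 \<longrightarrow>
          (\<forall>j\<in>J. (\<Sum>k\<in>K. err ap am x y H w h k j * rd ap am (w i \<bullet> x k) (u \<bullet> x k)) = 0)"
      proof -
        have "\<forall>u. (\<Sum>j\<in>J. h j i * Phi H w h i j u) = 0 \<longrightarrow> (\<forall>j\<in>J. Phi H w h i j u = 0)"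
          using noescape_zero[OF fH fK fJ st _ i] ne i by blast
        thus ?thesis unfolding Phi_def .
      qed
    qed
    thus "\<exists>M\<ge>0. \<forall>u. \<forall>j\<in>J. \<bar>Phi H w h i j u\<bar> \<le> M * (\<Sum>j\<in>J. h j i * Phi H w h i j u)"
      unfolding Phi_def .
  qed
  from bchoice[OF this] obtain Mf where Mf: "\<forall>i\<in>H. Mf i \<ge> 0 \<and> (\<forall>u. \<forall>j\<in>J. \<bar>Phi H w h i j u\<bar> \<le> Mf i * (\<Sum>j\<in>J. h j i * Phi H w h i j u))"
    by blast
  define Mx where "Mx = (\<Sum>i\<in>H. Mf i)"
  have Mx: "\<forall>i\<in>H. Mf i \<le> Mx" unfolding Mx_def using Mf fH by (auto intro: member_le_sum)
  have Mx0: "0 \<le> Mx" unfolding Mx_def using Mf by (auto intro: sum_nonneg)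
  define e2 where "e2 = 1 / ((Mx + 1) * (real (card J) + 1))"
  define Z where "Z = {p \<in> H \<times> K. w (fst p) \<bullet> x (snd p) \<noteq> 0}"
  define e1 where "e1 = Min (insert 1 ((\<lambda>p. \<bar>w (fst p) \<bullet> x (snd p)\<bar> / (norm (x (snd p)) + 1)) ` Z))"
  have finZ: "finite (insert 1 ((\<lambda>p. \<bar>w (fst p) \<bullet> x (snd p)\<bar> / (norm (x (snd p)) + 1)) ` Z))"
    unfolding Z_def using fH fK by simp
  have e1pos: "e1 > 0" unfolding e1_def
  proof (subst Min_gr_iff[OF finZ])
    show "insert 1 ((\<lambda>p. \<bar>w (fst p) \<bullet> x (snd p)\<bar> / (norm (x (snd p)) + 1)) ` Z) \<noteq> {}" by simp
    show "\<forall>a\<in>insert 1 ((\<lambda>p. \<bar>w (fst p) \<bullet> x (snd p)\<bar> / (norm (x (snd p)) + 1)) ` Z). 0 < a"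
      unfolding Z_def by (auto intro!: divide_pos_pos add_nonneg_pos)
  qed
  have e1le: "e1 \<le> \<bar>w i \<bullet> x k\<bar> / (norm (x k) + 1)" if "i \<in> H" "k \<in> K" "w i \<bullet> x k \<noteq> 0" for i k
    unfolding e1_def by (rule Min_le[OF finZ]) (use that in \<open>auto simp: Z_def image_iff intro!: bexI[of _ "(i, k)"]\<close>)
  have e2pos: "e2 > 0" unfolding e2_def using Mx0 by (auto intro!: divide_pos_pos mult_pos_pos add_nonneg_pos)
  define \<epsilon> where "\<epsilon> = min e1 e2"
  have epos: "\<epsilon> > 0" unfolding \<epsilon>_def using e1pos e2pos by simp
  show ?thesis unfolding local_min_def
  proof (intro exI[of _ \<epsilon>] conjI epos allI impI)
    fix w' h'
    assume A: "(\<forall>i\<in>H. norm (w' i - w i) < \<epsilon>) \<and> (\<forall>j\<in>J. \<forall>i\<in>H. \<bar>h' j i - h j i\<bar> < \<epsilon>)"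
    define \<delta> where "\<delta> i = w' i - w i" for i
    have exact: "\<forall>i\<in>H. rho ap am (w' i \<bullet> x k) = rho ap am (w i \<bullet> x k) + rd ap am (w i \<bullet> x k) (\<delta> i \<bullet> x k)"
      if k: "k \<in> K" for k
    proof
      fix i assume i: "i \<in> H"
      have "w' i \<bullet> x k = w i \<bullet> x k + \<delta> i \<bullet> x k" unfolding \<delta>_def by (simp add: inner_diff_left)
      moreover have "rho ap am (w i \<bullet> x k + \<delta> i \<bullet> x k) = rho ap am (w i \<bullet> x k) + rd ap am (w i \<bullet> x k) (\<delta> i \<bullet> x k)"
      proof (rule rho_add, intro impI)
        assume nz: "w i \<bullet> x k \<noteq> 0"
        have "\<bar>\<delta> i \<bullet> x k\<bar> \<le> norm (\<delta> i) * norm (x k)" by (rule Cauchy_Schwarz_ineq2)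
        also have "\<dots> \<le> e1 * norm (x k)" using A i unfolding \<delta>_def \<epsilon>_def
          by (intro mult_right_mono) auto
        also have "\<dots> \<le> (\<bar>w i \<bullet> x k\<bar> / (norm (x k) + 1)) * norm (x k)"
          using e1le[OF i k nz] by (intro mult_right_mono) auto
        also have "\<dots> \<le> \<bar>w i \<bullet> x k\<bar>"
        proof -
          have "norm (x k) / (norm (x k) + 1) \<le> 1" by (simp add: add_nonneg_pos)
          hence "\<bar>w i \<bullet> x k\<bar> * (norm (x k) / (norm (x k) + 1)) \<le> \<bar>w i \<bullet> x k\<bar> * 1"
            by (intro mult_left_mono) auto
          thus ?thesis by simp
        qed
        finally show "\<bar>\<delta> i \<bullet> x k\<bar> \<le> \<bar>w i \<bullet> x k\<bar>" .
      qed
      ultimately show "rho ap am (w' i \<bullet> x k) = rho ap am (w i \<bullet> x k) + rd ap am (w i \<bullet> x k) (\<delta> i \<bullet> x k)" by simp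
    qed
    define Dl where "Dl k j = (\<Sum>i\<in>H. (h' j i - h j i) * rho ap am (w i \<bullet> x k) + h' j i * rd ap am (w i \<bullet> x k) (\<delta> i \<bullet> x k))" for k j
    have "\<forall>k\<in>K. \<forall>j\<in>J. err ap am x y H w' h' k j = err ap am x y H w h k j + Dl k j"
    proof (intro ballI)
      fix k j assume k: "k \<in> K" and j: "j \<in> J"
      have "out ap am H w' h' (x k) j = out ap am H w h (x k) j + Dl k j"
        unfolding Dl_def by (rule out_pert[OF exact[OF k]])
      thus "err ap am x y H w' h' k j = err ap am x y H w h k j + Dl k j" by (simp add: err_def)
    qed
    from loss_diff[OF this]
    have "loss ap am x y K J H w' h' - loss ap am x y K J H w h =
       (\<Sum>k\<in>K. \<Sum>j\<in>J. err ap am x y H w h k j * Dl k j + (Dl k j)\<^sup>2 / 2)" .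
    also have "\<dots> \<ge> (\<Sum>k\<in>K. \<Sum>j\<in>J. err ap am x y H w h k j * Dl k j)"
      by (intro sum_mono) auto
    also have "(\<Sum>k\<in>K. \<Sum>j\<in>J. err ap am x y H w h k j * Dl k j) =
        (\<Sum>i\<in>H. \<Sum>j\<in>J. (h' j i - h j i) * Gf H w h i j + h' j i * Phi H w h i j (\<delta> i))"
      unfolding Dl_def by (rule sum_rearr)
    also have "\<dots> = (\<Sum>i\<in>H. \<Sum>j\<in>J. h' j i * Phi H w h i j (\<delta> i))"
      using sc by (intro sum.cong refl) auto
    also have "\<dots> \<ge> 0"
    proof (rule sum_nonneg)
      fix i assume i: "i \<in> H"
      define F where "F = (\<Sum>j\<in>J. h j i * Phi H w h i j (\<delta> i))"
      have F0: "F \<ge> 0" unfolding F_def using sc i by blast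
      have "(h' j i - h j i) * Phi H w h i j (\<delta> i) \<ge> - (\<epsilon> * (Mf i * F))" if j: "j \<in> J" for j
      proof -
        have "\<bar>(h' j i - h j i) * Phi H w h i j (\<delta> i)\<bar> = \<bar>h' j i - h j i\<bar> * \<bar>Phi H w h i j (\<delta> i)\<bar>"
          by (simp add: abs_mult)
        also have "\<dots> \<le> \<epsilon> * (Mf i * F)"
        proof (rule mult_mono)
          show "\<bar>h' j i - h j i\<bar> \<le> \<epsilon>" using A i j by (meson less_imp_le)
          show "\<bar>Phi H w h i j (\<delta> i)\<bar> \<le> Mf i * F" using Mf i j unfolding F_def by blast
        qed (use epos in auto)
        finally show ?thesis by linarith
      qed
      hence "(\<Sum>j\<in>J. (h' j i - h j i) * Phi H w h i j (\<delta> i)) \<ge> (\<Sum>j\<in>J. - (\<epsilon> * (Mf i * F)))"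
        by (intro sum_mono) auto
      moreover have "(\<Sum>j\<in>J. - (\<epsilon> * (Mf i * F))) = - ((real (card J) * \<epsilon> * Mf i) * F)" by simp
      moreover have "real (card J) * \<epsilon> * Mf i \<le> 1"
      proof -
        have "real (card J) * Mf i \<le> (real (card J) + 1) * (Mx + 1)"
          using Mx i Mf by (intro mult_mono) auto
        moreover have "\<epsilon> \<le> e2" unfolding \<epsilon>_def by simp
        ultimately have "real (card J) * Mf i * \<epsilon> \<le> (real (card J) + 1) * (Mx + 1) * e2"
          by (rule mult_mono) (use epos Mx0 in \<open>auto intro!: mult_nonneg_nonneg\<close>)
        also have "\<dots> = 1"
        proof -
          have "(real (card J) + 1) * (Mx + 1) > 0" using Mx0 by (intro mult_pos_pos) auto
          thus ?thesis unfolding e2_def using Mx0 by (simp add: mult.commute)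
        qed
        finally show ?thesis by (simp add: algebra_simps)
      qed
      hence "((real (card J) * \<epsilon> * Mf i) * F) \<le> F" using F0 mult_right_mono[of "real (card J) * \<epsilon> * Mf i" 1 F] by simp
      ultimately have "(\<Sum>j\<in>J. (h' j i - h j i) * Phi H w h i j (\<delta> i)) \<ge> - F" by linarith
      moreover have "(\<Sum>j\<in>J. h' j i * Phi H w h i j (\<delta> i)) = F + (\<Sum>j\<in>J. (h' j i - h j i) * Phi H w h i j (\<delta> i))"
        unfolding F_def by (simp add: sum.distrib[symmetric] algebra_simps)
      ultimately show "0 \<le> (\<Sum>j\<in>J. h' j i * Phi H w h i j (\<delta> i))" by linarith
    qed
    finally show "loss ap am x y K J H w h \<le> loss ap am x y K J H w' h'" by simp
  qed
qed


lemma out_rep: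
  assumes fI: "finite I" and fL: "finite L" and i0: "i0 \<in> I" and bpos: "\<forall>l\<in>L. \<beta> l > 0"
    and sbg: "(\<Sum>l\<in>L. \<beta> l * \<gamma> l) = 1"
  shows "out ap am (repH I i0 L) (repw w i0 \<beta>) (reph h i0 \<gamma>) xx j = out ap am I w h xx j"
proof -
  have disj: "Inl ` (I - {i0}) \<inter> Inr ` L = {}" by auto
  have "out ap am (repH I i0 L) (repw w i0 \<beta>) (reph h i0 \<gamma>) xx j =
     (\<Sum>i\<in>Inl ` (I - {i0}). reph h i0 \<gamma> j i * rho ap am (repw w i0 \<beta> i \<bullet> xx)) +
     (\<Sum>i\<in>Inr ` L. reph h i0 \<gamma> j i * rho ap am (repw w i0 \<beta> i \<bullet> xx))"
    unfolding out_def repH_def using fI fL disj by (intro sum.union_disjoint) auto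
  also have "\<dots> = (\<Sum>i\<in>I - {i0}. h j i * rho ap am (w i \<bullet> xx)) +
     (\<Sum>l\<in>L. \<gamma> l * h j i0 * rho ap am ((\<beta> l *\<^sub>R w i0) \<bullet> xx))"
    by (simp add: sum.reindex reph_def repw_def)
  also have "(\<Sum>l\<in>L. \<gamma> l * h j i0 * rho ap am ((\<beta> l *\<^sub>R w i0) \<bullet> xx)) =
      (\<Sum>l\<in>L. (\<beta> l * \<gamma> l) * (h j i0 * rho ap am (w i0 \<bullet> xx)))"
    using bpos by (intro sum.cong refl) (simp add: rho_hom less_imp_le)
  also have "\<dots> = h j i0 * rho ap am (w i0 \<bullet> xx)" using sbg by (simp add: sum_distrib_right[symmetric])
  also have "(\<Sum>i\<in>I - {i0}. h j i * rho ap am (w i \<bullet> xx)) + h j i0 * rho ap am (w i0 \<bullet> xx) =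
      out ap am I w h xx j"
    unfolding out_def using fI i0 by (simp add: sum.remove)
  finally show ?thesis .
qed

lemma err_rep:
  assumes "finite I" "finite L" "i0 \<in> I" "\<forall>l\<in>L. \<beta> l > 0" "(\<Sum>l\<in>L. \<beta> l * \<gamma> l) = 1"
  shows "err ap am x y (repH I i0 L) (repw w i0 \<beta>) (reph h i0 \<gamma>) = err ap am x y I w h"
  by (intro ext) (simp add: err_def out_rep[OF assms])

lemma Phi_rep_Inl:
  assumes "finite I" "finite L" "i0 \<in> I" "\<forall>l\<in>L. \<beta> l > 0" "(\<Sum>l\<in>L. \<beta> l * \<gamma> l) = 1"
  shows "Phi (repH I i0 L) (repw w i0 \<beta>) (reph h i0 \<gamma>) (Inl i) j u = Phi I w h i j u"
  unfolding Phi_def err_rep[OF assms] by (simp add: repw_def)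

lemma Phi_rep_Inr:
  assumes "finite I" "finite L" "i0 \<in> I" "\<forall>l\<in>L. \<beta> l > 0" "(\<Sum>l\<in>L. \<beta> l * \<gamma> l) = 1" and l: "l \<in> L"
  shows "Phi (repH I i0 L) (repw w i0 \<beta>) (reph h i0 \<gamma>) (Inr l) j u = Phi I w h i0 j u"
  unfolding Phi_def err_rep[OF assms(1-5)] using assms(4) l by (simp add: repw_def rd_scale)

lemma Gf_rep_Inl:
  assumes "finite I" "finite L" "i0 \<in> I" "\<forall>l\<in>L. \<beta> l > 0" "(\<Sum>l\<in>L. \<beta> l * \<gamma> l) = 1"
  shows "Gf (repH I i0 L) (repw w i0 \<beta>) (reph h i0 \<gamma>) (Inl i) j = Gf I w h i j"
  unfolding Gf_def err_rep[OF assms] by (simp add: repw_def)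

lemma Gf_rep_Inr:
  assumes "finite I" "finite L" "i0 \<in> I" "\<forall>l\<in>L. \<beta> l > 0" "(\<Sum>l\<in>L. \<beta> l * \<gamma> l) = 1" and l: "l \<in> L"
  shows "Gf (repH I i0 L) (repw w i0 \<beta>) (reph h i0 \<gamma>) (Inr l) j = \<beta> l * Gf I w h i0 j"
  unfolding Gf_def err_rep[OF assms(1-5)] using assms(4) l
  by (simp add: repw_def rho_hom less_imp_le sum_distrib_left algebra_simps)

end

lemma tangential_scale: "0 < b \<Longrightarrow> tangential (b *\<^sub>R w) v \<longleftrightarrow> tangential w v"
  by (auto simp: tangential_def)

theorem proposition1:
  fixes ap am :: real
    and x :: "'k \<Rightarrow> real^'d" and y :: "'k \<Rightarrow> 'j \<Rightarrow> real"
    and K :: "'k set" and J :: "'j set" and I :: "'i set"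
    and w :: "'i \<Rightarrow> real^'d" and h :: "'j \<Rightarrow> 'i \<Rightarrow> real"
    and i0 :: 'i and L :: "'l set" and \<beta> \<gamma> :: "'l \<Rightarrow> real"
  assumes "CARD('d) > 1" and "finite I" and "finite J" and "finite K" and "ap \<noteq> am"
    and "finite L" and "\<forall>l\<in>L. \<beta> l > 0" and "(\<Sum>l\<in>L. \<beta> l * \<gamma> l) = 1"
    and "i0 \<in> I"
    and "stationary ap am x y K J I w h"
  shows "(stationary ap am x y K J (repH I i0 L) (repw w i0 \<beta>) (reph h i0 \<gamma>) \<longleftrightarrow>
            ((\<forall>v. tangential (w i0) v \<longrightarrow> tderiv ap am x y K J I w h i0 v = 0)
             \<or> (\<forall>l\<in>L. \<gamma> l \<ge> 0)))
       \<and> (type1_min ap am x y K J I w h \<longrightarrow>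
           (type1_min ap am x y K J (repH I i0 L) (repw w i0 \<beta>) (reph h i0 \<gamma>) \<longleftrightarrow>
            ((\<forall>v. tangential (w i0) v \<longrightarrow> tderiv ap am x y K J I w h i0 v = 0)
             \<or> (\<forall>l\<in>L. \<gamma> l > 0))))"
proof -
  note fI = assms(2) and fJ = assms(3) and fK = assms(4) and fL = assms(6) and bpos = assms(7)
    and sbg = assms(8) and i0 = assms(9) and stP = assms(10)
  note rep = fI fL i0 bpos sbg
  define H' where "H' = repH I i0 L"
  define w' where "w' = repw w i0 \<beta>"
  define h' where "h' = reph h i0 \<gamma>"
  have fH': "finite H'" unfolding H'_def repH_def using fI fL by simp
  define F where "F u = (\<Sum>j\<in>J. h j i0 * Phi ap am x y K I w h i0 j u)" for u
  define T1 where "T1 \<longleftrightarrow> (\<forall>v. tangential (w i0) v \<longrightarrow> tderiv ap am x y K J I w h i0 v = 0)"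
  have scP: "\<forall>i\<in>I. (\<forall>j\<in>J. Gf ap am x y K I w h i j = 0) \<and> (\<forall>u. 0 \<le> (\<Sum>j\<in>J. h j i * Phi ap am x y K I w h i j u))"
    using stP stationary_char[OF fI fK fJ] by blast
  have F0: "\<forall>u. 0 \<le> F u" using scP i0 unfolding F_def by blast
  have T1_iff: "T1 \<longleftrightarrow> (\<forall>u. F u = 0)"
  proof
    assume "\<forall>u. F u = 0"
    thus T1 unfolding T1_def F_def by (simp add: tderiv_eq[OF fK])
  next
    assume T: T1
    show "\<forall>u. F u = 0"
    proof
      fix u
      have G: "\<forall>j\<in>J. Gf ap am x y K I w h i0 j = 0" using scP i0 by blast
      from Phi_radial[OF G, of u] show "F u = 0"
      proof
        assume "\<forall>j\<in>J. Phi ap am x y K I w h i0 j u = 0"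
        thus "F u = 0" unfolding F_def by simp
      next
        assume "\<exists>c>0. \<exists>v. tangential (w i0) v \<and> (\<forall>j\<in>J. Phi ap am x y K I w h i0 j u = c * Phi ap am x y K I w h i0 j v)"
        then obtain c v where c: "c > 0" "tangential (w i0) v" "\<forall>j\<in>J. Phi ap am x y K I w h i0 j u = c * Phi ap am x y K I w h i0 j v" by blast
        have "F v = 0" using T c(2) unfolding T1_def F_def by (simp add: tderiv_eq[OF fK])
        moreover have "F u = c * F v" unfolding F_def using c(3) by (simp add: sum_distrib_left algebra_simps)
        ultimately show "F u = 0" by simp
      qed
    qed
  qed
  have allH': "(\<forall>i\<in>H'. P i) \<longleftrightarrow> (\<forall>i\<in>I - {i0}. P (Inl i)) \<and> (\<forall>l\<in>L. P (Inr l))" for P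
    unfolding H'_def repH_def by auto
  have stR_char: "stationary ap am x y K J H' w' h' \<longleftrightarrow> (\<forall>l\<in>L. \<forall>u. 0 \<le> \<gamma> l * F u)"
  proof -
    have "stationary ap am x y K J H' w' h' \<longleftrightarrow>
      (\<forall>i\<in>H'. (\<forall>j\<in>J. Gf ap am x y K H' w' h' i j = 0) \<and> (\<forall>u. 0 \<le> (\<Sum>j\<in>J. h' j i * Phi ap am x y K H' w' h' i j u)))"
      by (rule stationary_char[OF fH' fK fJ])
    also have "\<dots> \<longleftrightarrow> (\<forall>l\<in>L. \<forall>u. 0 \<le> \<gamma> l * F u)"
    proof -
      have A: "(\<forall>j\<in>J. Gf ap am x y K H' w' h' (Inl i) j = 0) \<and> (\<forall>u. 0 \<le> (\<Sum>j\<in>J. h' j (Inl i) * Phi ap am x y K H' w' h' (Inl i) j u))"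
        if "i \<in> I - {i0}" for i
        using scP that unfolding H'_def w'_def h'_def
        by (simp add: Gf_rep_Inl[OF rep] Phi_rep_Inl[OF rep] reph_def)
      have B: "((\<forall>j\<in>J. Gf ap am x y K H' w' h' (Inr l) j = 0) \<and> (\<forall>u. 0 \<le> (\<Sum>j\<in>J. h' j (Inr l) * Phi ap am x y K H' w' h' (Inr l) j u)))
          \<longleftrightarrow> (\<forall>u. 0 \<le> \<gamma> l * F u)" if l: "l \<in> L" for l
        using scP i0 unfolding H'_def w'_def h'_def F_def
        by (simp add: Gf_rep_Inr[OF rep l] Phi_rep_Inr[OF rep l] reph_def sum_distrib_left algebra_simps)
      show ?thesis unfolding allH' using A B by auto
    qed
    finally show ?thesis .
  qed
  have part1: "stationary ap am x y K J H' w' h' \<longleftrightarrow> T1 \<or> (\<forall>l\<in>L. \<gamma> l \<ge> 0)"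
  proof
    assume S: "stationary ap am x y K J H' w' h'"
    show "T1 \<or> (\<forall>l\<in>L. \<gamma> l \<ge> 0)"
    proof (cases "\<forall>l\<in>L. \<gamma> l \<ge> 0")
      case False
      then obtain l where l: "l \<in> L" "\<gamma> l < 0" by force
      have "\<forall>u. F u = 0"
      proof
        fix u
        have "0 \<le> \<gamma> l * F u" using S l stR_char by blast
        hence "F u \<le> 0" using l(2) by (simp add: mult_le_0_iff zero_le_mult_iff)
        thus "F u = 0" using F0 by (meson antisym)
      qed
      thus ?thesis using T1_iff by simp
    qed simp
  next
    assume "T1 \<or> (\<forall>l\<in>L. \<gamma> l \<ge> 0)"
    thus "stationary ap am x y K J H' w' h'" unfolding stR_char using T1_iff F0 by auto
  qed
  have escInl: "escape ap am x y K J H' w' h' (Inl i) \<longleftrightarrow> escape ap am x y K J I w h i" for i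
    unfolding escape_iff[OF fK] H'_def w'_def h'_def
    by (simp only: Phi_rep_Inl[OF rep]) (simp add: reph_def repw_def)
  have escInr: "escape ap am x y K J H' w' h' (Inr l) \<longleftrightarrow>
      (\<exists>j'\<in>J. \<exists>v. tangential (w i0) v \<and> \<gamma> l * F v = 0 \<and> Phi ap am x y K I w h i0 j' v \<noteq> 0)" if l: "l \<in> L" for l
  proof -
    have "tangential (w' (Inr l)) v \<longleftrightarrow> tangential (w i0) v" for v
      unfolding w'_def repw_def using bpos l by (simp add: tangential_scale)
    moreover have "(\<Sum>j\<in>J. h' j (Inr l) * Phi ap am x y K H' w' h' (Inr l) j v) = \<gamma> l * F v" for v
      unfolding H'_def w'_def h'_def F_def
      by (simp add: Phi_rep_Inr[OF rep l] reph_def sum_distrib_left algebra_simps)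
    moreover have "Phi ap am x y K H' w' h' (Inr l) j v = Phi ap am x y K I w h i0 j v" for j v
      unfolding H'_def w'_def h'_def by (rule Phi_rep_Inr[OF rep l])
    ultimately show ?thesis unfolding escape_iff[OF fK] by simp
  qed
  have part2: "type1_min ap am x y K J H' w' h' \<longleftrightarrow> T1 \<or> (\<forall>l\<in>L. \<gamma> l > 0)"
    if t1: "type1_min ap am x y K J I w h"
  proof
    assume t1': "type1_min ap am x y K J H' w' h'"
    show "T1 \<or> (\<forall>l\<in>L. \<gamma> l > 0)"
    proof (rule ccontr)
      assume "\<not> (T1 \<or> (\<forall>l\<in>L. \<gamma> l > 0))"
      then obtain l where nT: "\<not> T1" and l: "l \<in> L" "\<gamma> l \<le> 0" by force
      have "\<forall>l\<in>L. \<gamma> l \<ge> 0" using t1' part1 nT unfolding type1_min_def by blast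
      hence g0: "\<gamma> l = 0" using l by force
      obtain v where v: "tangential (w i0) v" "F v \<noteq> 0"
        using nT unfolding T1_def F_def by (auto simp: tderiv_eq[OF fK])
      obtain j' where j': "j' \<in> J" "Phi ap am x y K I w h i0 j' v \<noteq> 0"
      proof (rule ccontr)
        assume "\<not> thesis"
        hence "\<forall>j\<in>J. Phi ap am x y K I w h i0 j v = 0" using that by blast
        hence "F v = 0" unfolding F_def by simp
        thus False using v by simp
      qed
      have "escape ap am x y K J H' w' h' (Inr l)" unfolding escInr[OF l(1)] using v j' g0 by auto
      moreover have "Inr l \<in> H'" unfolding H'_def repH_def using l by auto
      ultimately show False using t1' unfolding type1_min_def by blast
    qed
  next
    assume C: "T1 \<or> (\<forall>l\<in>L. \<gamma> l > 0)"
    have st': "stationary ap am x y K J H' w' h'" using part1 C by (auto intro: less_imp_le)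
    have ne: "\<forall>i\<in>H'. \<not> escape ap am x y K J H' w' h' i"
      unfolding allH'
    proof (intro conjI ballI)
      fix i assume "i \<in> I - {i0}"
      thus "\<not> escape ap am x y K J H' w' h' (Inl i)" using t1 unfolding escInl type1_min_def by blast
    next
      fix l assume l: "l \<in> L"
      show "\<not> escape ap am x y K J H' w' h' (Inr l)"
      proof
        assume "escape ap am x y K J H' w' h' (Inr l)"
        then obtain j' v where jv: "j' \<in> J" "tangential (w i0) v" "\<gamma> l * F v = 0" "Phi ap am x y K I w h i0 j' v \<noteq> 0"
          unfolding escInr[OF l] by blast
        have "F v = 0"
        proof (cases T1)
          case True thus ?thesis using T1_iff by simp
        next
          case False thus ?thesis using C jv(3) l by auto
        qed
        hence "escape ap am x y K J I w h i0" unfolding escape_iff[OF fK] F_def using jv by blast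
        thus False using t1 i0 unfolding type1_min_def by blast
      qed
    qed
    have "local_min ap am x y K J H' w' h'" by (rule local_min_noescape[OF fH' fK fJ st' ne])
    thus "type1_min ap am x y K J H' w' h'" unfolding type1_min_def using st' ne by blast
  qed
  show ?thesis using part1 part2 unfolding H'_def w'_def h'_def T1_def by blast
qed

end
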